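(* Let $R$ be a ring and let $a\in R$ be regular. If (1) the right $R$-module $aR/ar(a^2)$ is projective and (2) $ar(a^2)\cong R/\big(r(a)+aR\big)$ as right $R$-modules, then $a$ is special clean, i.e., there exists an idempotent $e\in R$ such that $a-e$ is a unit of $R$ and $aR\cap eR=0$.
   Context: All rings are associative with identity; modules are right modules. An element $x\in R$ is regular if $x=xyx$ for some $y\in R$. For $x\in R$, $r(x)=\{y\in R: xy=0\}$, and $ar(a^2)=\{ay: y\in r(a^2)\}$. *)

theory Defs
  imports Main
begin

record ('r, 'm) rmod =
  rcarrier :: "'m set"
  radd :: "'m \<Rightarrow> 'm \<Rightarrow> 'm"
  rzero :: 'm
  rsmul :: "'m \<Rightarrow> 'r \<Rightarrow> 'm"

definition rmodule :: "('r::ring_1, 'm) rmod \<Rightarrow> bool" where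
  "rmodule M \<longleftrightarrow>
     rzero M \<in> rcarrier M \<and>
     (\<forall>x\<in>rcarrier M. \<forall>y\<in>rcarrier M. radd M x y \<in> rcarrier M) \<and>
     (\<forall>x\<in>rcarrier M. \<forall>y\<in>rcarrier M. \<forall>z\<in>rcarrier M.
        radd M (radd M x y) z = radd M x (radd M y z)) \<and>
     (\<forall>x\<in>rcarrier M. \<forall>y\<in>rcarrier M. radd M x y = radd M y x) \<and>
     (\<forall>x\<in>rcarrier M. radd M (rzero M) x = x) \<and>
     (\<forall>x\<in>rcarrier M. \<exists>y\<in>rcarrier M. radd M x y = rzero M) \<and>
     (\<forall>x\<in>rcarrier M. \<forall>r. rsmul M x r \<in> rcarrier M) \<and>
     (\<forall>x\<in>rcarrier M. \<forall>y\<in>rcarrier M. \<forall>r.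
        rsmul M (radd M x y) r = radd M (rsmul M x r) (rsmul M y r)) \<and>
     (\<forall>x\<in>rcarrier M. \<forall>r s. rsmul M x (r + s) = radd M (rsmul M x r) (rsmul M x s)) \<and>
     (\<forall>x\<in>rcarrier M. \<forall>r s. rsmul M x (r * s) = rsmul M (rsmul M x r) s) \<and>
     (\<forall>x\<in>rcarrier M. rsmul M x 1 = x)"

definition rhom :: "('r::ring_1, 'm) rmod \<Rightarrow> ('r, 'n) rmod \<Rightarrow> ('m \<Rightarrow> 'n) \<Rightarrow> bool" where
  "rhom M N f \<longleftrightarrow>
     (\<forall>x\<in>rcarrier M. f x \<in> rcarrier N) \<and>
     (\<forall>x\<in>rcarrier M. \<forall>y\<in>rcarrier M. f (radd M x y) = radd N (f x) (f y)) \<and>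
     (\<forall>x\<in>rcarrier M. \<forall>r. f (rsmul M x r) = rsmul N (f x) r)"

definition riso :: "('r::ring_1, 'm) rmod \<Rightarrow> ('r, 'n) rmod \<Rightarrow> ('m \<Rightarrow> 'n) \<Rightarrow> bool" where
  "riso M N f \<longleftrightarrow> rhom M N f \<and> bij_betw f (rcarrier M) (rcarrier N)"

definition rmod_isomorphic :: "('r::ring_1, 'm) rmod \<Rightarrow> ('r, 'n) rmod \<Rightarrow> bool" where
  "rmod_isomorphic M N \<longleftrightarrow> (\<exists>f. riso M N f)"

text \<open>The test modules M (the ones mapping
  onto N) range over right modules whose elements are of type 'b \<Rightarrow> 'r; this type
  contains the free module R^(P) on the carrier of P (finitely supported functions),
  so the notion coincides with the usual one.\<close>

definition rprojective :: "('r::ring_1, 'b) rmod \<Rightarrow> bool" where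
  "rprojective P \<longleftrightarrow> rmodule P \<and>
     (\<forall>(M :: ('r, 'b \<Rightarrow> 'r) rmod) (N :: ('r, 'b) rmod) g f.
        rmodule M \<and> rmodule N \<and> rhom M N g \<and> g ` rcarrier M = rcarrier N \<and> rhom P N f
        \<longrightarrow> (\<exists>h. rhom P M h \<and> (\<forall>x\<in>rcarrier P. g (h x) = f x)))"

definition sub_rmod :: "'r::ring_1 set \<Rightarrow> ('r, 'r) rmod" where
  "sub_rmod A = \<lparr>rcarrier = A, radd = (+), rzero = 0, rsmul = (*)\<rparr>"

definition coset :: "'r::ring_1 \<Rightarrow> 'r set \<Rightarrow> 'r set" where
  "coset x B = {x + b | b. b \<in> B}"

definition quot_rmod :: "'r::ring_1 set \<Rightarrow> 'r set \<Rightarrow> ('r, 'r set) rmod" where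
  "quot_rmod A B = \<lparr>rcarrier = {coset x B | x. x \<in> A},
      radd = (\<lambda>X Y. {x + y | x y. x \<in> X \<and> y \<in> Y}),
      rzero = B,
      rsmul = (\<lambda>X r. {x * r + b | x b. x \<in> X \<and> b \<in> B})\<rparr>"

definition rann :: "'r::ring_1 \<Rightarrow> 'r set" where
  "rann x = {y. x * y = 0}"

definition principal_right :: "'r::ring_1 \<Rightarrow> 'r set" where
  "principal_right x = {x * y | y. True}"

definition a_rann_sq :: "'r::ring_1 \<Rightarrow> 'r set" where
  "a_rann_sq a = {a * y | y. y \<in> rann (a * a)}"

definition set_plus_r :: "'r::ring_1 set \<Rightarrow> 'r set \<Rightarrow> 'r set" where
  "set_plus_r A B = {x + y | x y. x \<in> A \<and> y \<in> B}"

definition regular_elem :: "'r::ring_1 \<Rightarrow> bool" where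
  "regular_elem x \<longleftrightarrow> (\<exists>y. x = x * y * x)"

definition is_unit_r :: "'r::ring_1 \<Rightarrow> bool" where
  "is_unit_r u \<longleftrightarrow> (\<exists>v. u * v = 1 \<and> v * u = 1)"

definition special_clean :: "'r::ring_1 \<Rightarrow> bool" where
  "special_clean a \<longleftrightarrow> (\<exists>e. e * e = e \<and> is_unit_r (a - e) \<and>
      principal_right a \<inter> principal_right e = {0})"

end

theory Submission
  imports Defs
begin

definition rideal :: "'r::ring_1 set \<Rightarrow> bool" where
  "rideal B \<longleftrightarrow> 0 \<in> B \<and> (\<forall>x\<in>B. \<forall>y\<in>B. x + y \<in> B) \<and> (\<forall>x\<in>B. - x \<in> B)
     \<and> (\<forall>x\<in>B. \<forall>r. x * r \<in> B)"

lemma rideal_diff: "rideal B \<Longrightarrow> x \<in> B \<Longrightarrow> y \<in> B \<Longrightarrow> x - y \<in> B"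
  unfolding rideal_def by (metis diff_conv_add_uminus)

lemma coset_eq:
  assumes "rideal B" shows "coset x B = coset y B \<longleftrightarrow> x - y \<in> B"
proof
  assume h: "coset x B = coset y B"
  have "x \<in> coset x B" unfolding coset_def using assms rideal_def by force
  then obtain b where "b \<in> B" "x = y + b" using h unfolding coset_def by auto
  then show "x - y \<in> B" by simp
next
  assume h: "x - y \<in> B"
  show "coset x B = coset y B"
  proof (rule set_eqI)
    fix z
    have "z \<in> coset x B \<longleftrightarrow> (\<exists>b\<in>B. z = x + b)" unfolding coset_def by auto
    also have "\<dots> \<longleftrightarrow> (\<exists>b\<in>B. z = y + b)"
    proof
      assume "\<exists>b\<in>B. z = x + b"
      then obtain b where b: "b \<in> B" "z = x + b" by blast
      have "(x - y) + b \<in> B" using h b assms unfolding rideal_def by blast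
      moreover have "z = y + ((x - y) + b)" using b by simp
      ultimately show "\<exists>b\<in>B. z = y + b" by blast
    next
      assume "\<exists>b\<in>B. z = y + b"
      then obtain b where b: "b \<in> B" "z = y + b" by blast
      have "-(x - y) \<in> B" using h assms unfolding rideal_def by blast
      then have "-(x - y) + b \<in> B" using b assms unfolding rideal_def by blast
      moreover have "z = x + (-(x - y) + b)" using b by simp
      ultimately show "\<exists>b\<in>B. z = x + b" by blast
    qed
    also have "\<dots> \<longleftrightarrow> z \<in> coset y B" unfolding coset_def by auto
    finally show "z \<in> coset x B \<longleftrightarrow> z \<in> coset y B" .
  qed
qed

lemma coset_zero_eq: "rideal B \<Longrightarrow> coset 0 B = B"
  unfolding coset_def by auto

lemma quot_smul:
  assumes "rideal B" shows "rsmul (quot_rmod A B) (coset x B) r = coset (x * r) B"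
proof -
  have "rsmul (quot_rmod A B) (coset x B) r = {u * r + b |u b. u \<in> coset x B \<and> b \<in> B}"
    unfolding quot_rmod_def by simp
  also have "\<dots> = coset (x * r) B"
  proof (rule set_eqI, rule iffI)
    fix z assume "z \<in> {u * r + b |u b. u \<in> coset x B \<and> b \<in> B}"
    then obtain b1 b where "b1 \<in> B" "b \<in> B" "z = (x + b1) * r + b" unfolding coset_def by auto
    moreover have "b1 * r + b \<in> B" using calculation assms unfolding rideal_def by blast
    moreover have "z = x * r + (b1 * r + b)" using calculation by (simp add: algebra_simps)
    ultimately show "z \<in> coset (x * r) B" unfolding coset_def by blast
  next
    fix z assume "z \<in> coset (x * r) B"
    then obtain b where b: "b \<in> B" "z = x * r + b" unfolding coset_def by auto
    have "x \<in> coset x B" unfolding coset_def using assms rideal_def by force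
    then show "z \<in> {u * r + b |u b. u \<in> coset x B \<and> b \<in> B}" using b by blast
  qed
  finally show ?thesis .
qed

lemma quot_add:
  assumes "rideal B" shows "radd (quot_rmod A B) (coset x B) (coset y B) = coset (x + y) B"
proof -
  have "radd (quot_rmod A B) (coset x B) (coset y B) = {u + v |u v. u \<in> coset x B \<and> v \<in> coset y B}"
    unfolding quot_rmod_def by simp
  also have "\<dots> = coset (x + y) B"
  proof (rule set_eqI, rule iffI)
    fix z assume "z \<in> {u + v |u v. u \<in> coset x B \<and> v \<in> coset y B}"
    then obtain b1 b2 where "b1 \<in> B" "b2 \<in> B" "z = (x + b1) + (y + b2)" unfolding coset_def by auto
    moreover have "b1 + b2 \<in> B" using calculation assms unfolding rideal_def by blast
    moreover have "z = (x + y) + (b1 + b2)" using calculation by (simp add: algebra_simps)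
    ultimately show "z \<in> coset (x + y) B" unfolding coset_def by blast
  next
    fix z assume "z \<in> coset (x + y) B"
    then obtain b where b: "b \<in> B" "z = (x + y) + b" unfolding coset_def by auto
    have "x + b \<in> coset x B" using b unfolding coset_def by blast
    moreover have "y \<in> coset y B" unfolding coset_def using assms rideal_def by force
    moreover have "z = (x + b) + y" using b by (simp add: algebra_simps)
    ultimately show "z \<in> {u + v |u v. u \<in> coset x B \<and> v \<in> coset y B}" by blast
  qed
  finally show ?thesis .
qed

definition constmod :: "'r::ring_1 set \<Rightarrow> ('r, 'r set \<Rightarrow> 'r) rmod" where
  "constmod A = \<lparr>rcarrier = {(\<lambda>_. z) | z. z \<in> A}, radd = (\<lambda>F G i. F i + G i),
     rzero = (\<lambda>_. 0), rsmul = (\<lambda>F r i. F i * r)\<rparr>"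

lemma constmod_rmodule: assumes "rideal A" shows "rmodule (constmod A)"
  using assms unfolding rmodule_def constmod_def rideal_def
  by (auto simp: algebra_simps; metis add.right_inverse)

lemma rideal_K: "rideal (a_rann_sq (a::'r::ring_1))"
  unfolding rideal_def a_rann_sq_def rann_def
  by (auto simp: algebra_simps; metis mult.assoc mult_zero_left distrib_left minus_mult_right
      add.right_neutral mult_zero_right neg_equal_0_iff_equal)

lemma rideal_P: "rideal (principal_right (a::'r::ring_1))"
  unfolding rideal_def principal_right_def
  by (auto; metis mult.assoc mult_zero_right distrib_left minus_mult_right)

lemma rideal_S: "rideal (set_plus_r (rann (a::'r::ring_1)) (principal_right a))"
  unfolding rideal_def
proof (intro conjI ballI allI)
  let ?S = "set_plus_r (rann a) (principal_right a)"
  have mem: "z \<in> ?S \<longleftrightarrow> (\<exists>u v. z = u + a * v \<and> a * u = 0)" for z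
    unfolding set_plus_r_def principal_right_def rann_def by auto
  show "0 \<in> ?S" unfolding mem by (rule exI[of _ 0], rule exI[of _ 0]) simp
  fix x assume "x \<in> ?S"
  then obtain u v where x: "x = u + a * v" "a * u = 0" unfolding mem by blast
  { fix y assume "y \<in> ?S"
    then obtain u' v' where y: "y = u' + a * v'" "a * u' = 0" unfolding mem by blast
    have "x + y = (u + u') + a * (v + v')" "a * (u + u') = 0"
      using x y by (simp_all add: algebra_simps)
    then show "x + y \<in> ?S" unfolding mem by blast }
  have "- x = (- u) + a * (- v)" "a * (- u) = 0" using x by simp_all
  then show "- x \<in> ?S" unfolding mem by blast
  fix r
  have "x * r = (u * r) + a * (v * r)" "a * (u * r) = 0" using x
    by (simp_all add: algebra_simps flip: mult.assoc)
  then show "x * r \<in> ?S" unfolding mem by blast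
qed

lemma memK: "z \<in> a_rann_sq a \<longleftrightarrow> z \<in> principal_right a \<and> a * z = (0::'r::ring_1)"
  unfolding a_rann_sq_def principal_right_def rann_def by (auto simp: mult.assoc)

lemma memS: "z \<in> set_plus_r (rann a) (principal_right a) \<longleftrightarrow>
   (\<exists>u v. z = u + a * v \<and> a * u = (0::'r::ring_1))"
  unfolding set_plus_r_def principal_right_def rann_def by auto

lemma step_proj:
  fixes a x :: "'r::ring_1"
  assumes ax: "a * x * a = a"
    and proj: "rprojective (quot_rmod (principal_right a) (a_rann_sq a))"
  shows "\<exists>c. c \<in> principal_right a \<and> c = c * (a * x) \<and> a * c = a * (a * x)
          \<and> (\<forall>z\<in>a_rann_sq a. c * z = 0)"
proof -
  define A where "A = principal_right a"
  define K where "K = a_rann_sq a"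
  define f where "f = a * x"
  define P where "P = quot_rmod A K"
  define M where "M = constmod A"
  define g where "g = (\<lambda>F::'r set \<Rightarrow> 'r. coset (F {}) K)"
  have rK: "rideal K" unfolding K_def by (rule rideal_K)
  have rA: "rideal A" unfolding A_def by (rule rideal_P)
  have rmP: "rmodule P" using proj unfolding rprojective_def P_def A_def K_def by blast
  have rmM: "rmodule M" unfolding M_def by (rule constmod_rmodule[OF rA])
  have carP: "rcarrier P = {coset z K | z. z \<in> A}" unfolding P_def quot_rmod_def by simp
  have carM: "rcarrier M = {(\<lambda>_. z) | z. z \<in> A}" unfolding M_def constmod_def by simp
  have hg: "rhom M P g"
    unfolding rhom_def
  proof (intro conjI ballI allI)
    fix F assume "F \<in> rcarrier M"
    then obtain z where z: "F = (\<lambda>_. z)" "z \<in> A" using carM by blast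
    then show "g F \<in> rcarrier P" unfolding carP g_def by auto
    fix r
    show "g (rsmul M F r) = rsmul P (g F) r"
      using z unfolding g_def M_def constmod_def P_def by (simp add: quot_smul[OF rK])
    fix G assume "G \<in> rcarrier M"
    then obtain w where w: "G = (\<lambda>_. w)" "w \<in> A" using carM by blast
    show "g (radd M F G) = radd P (g F) (g G)"
      using z w unfolding g_def M_def constmod_def P_def by (simp add: quot_add[OF rK])
  qed
  have gsurj: "g ` rcarrier M = rcarrier P"
    unfolding carM carP g_def by auto
  have hid: "rhom P P id" unfolding rhom_def by simp
  from proj have "\<exists>h. rhom P M h \<and> (\<forall>X\<in>rcarrier P. g (h X) = id X)"
    unfolding rprojective_def P_def[symmetric] A_def[symmetric] K_def[symmetric]
    using rmM rmP hg gsurj hid unfolding M_def by blast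
  then obtain h where hh: "rhom P M h" and hinv: "\<forall>X\<in>rcarrier P. g (h X) = X" by auto
  have fA: "f \<in> A" unfolding f_def A_def principal_right_def by auto
  have cfP: "coset f K \<in> rcarrier P" using fA carP by auto
  then have "h (coset f K) \<in> rcarrier M" using hh unfolding rhom_def by blast
  then obtain c where c: "h (coset f K) = (\<lambda>_. c)" "c \<in> A" using carM by blast
  have hsm: "h (rsmul P (coset f K) r) = (\<lambda>_. c * r)" for r
    using hh cfP c unfolding rhom_def M_def constmod_def by simp
  have smP: "rsmul P (coset u K) r = coset (u * r) K" for u r
    unfolding P_def by (rule quot_smul[OF rK])
  have fA2: "f * m = m" if "m \<in> A" for m
    using that ax unfolding A_def principal_right_def f_def by (auto simp flip: mult.assoc)
  have "g (h (coset f K)) = coset f K" using hinv cfP by blast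
  then have "coset c K = coset f K" using c unfolding g_def by simp
  then have cf: "c - f \<in> K" using coset_eq[OF rK] by blast
  have "(\<lambda>_. c) = (\<lambda>_::'r set. c * f)" using hsm[of f] c smP[of f f] fA2[OF fA] by simp
  then have c1: "c = c * f" by meson
  have c2: "a * c = a * f"
  proof -
    have "a * (c - f) = 0" using cf unfolding K_def memK by blast
    then show ?thesis by (simp add: algebra_simps)
  qed
  have c3: "c * z = 0" if z: "z \<in> K" for z
  proof -
    have zA: "z \<in> A" using z unfolding K_def memK A_def by blast
    have "coset (f * z) K = coset (f * 0) K"
      using z fA2[OF zA] coset_eq[OF rK] by simp
    then have "(\<lambda>_::'r set. c * z) = (\<lambda>_. c * 0)" using hsm[of z] hsm[of 0] smP by metis
    then show ?thesis by (metis mult_zero_right)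
  qed
  show ?thesis using c(2) c1 c2 c3 unfolding A_def K_def f_def by blast
qed

lemma step_iso:
  fixes a x k :: "'r::ring_1"
  assumes ax: "a * x * a = a"
    and kK: "k \<in> a_rann_sq a" and kid: "\<forall>z\<in>a_rann_sq a. k * z = z"
    and iso: "rmod_isomorphic (sub_rmod (a_rann_sq a))
           (quot_rmod UNIV (set_plus_r (rann a) (principal_right a)))"
  shows "\<exists>s t. (a * x) * t = 0 \<and> t = t * k \<and> s * t = k
     \<and> (\<forall>w\<in>set_plus_r (rann a) (principal_right a). s * w = 0)
     \<and> (\<forall>y. y - t * s * y \<in> set_plus_r (rann a) (principal_right a))"
proof -
  define K where "K = a_rann_sq a"
  define S where "S = set_plus_r (rann a) (principal_right a)"
  define f where "f = a * x"
  define Q where "Q = quot_rmod (UNIV::'r set) S"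
  have rK: "rideal K" unfolding K_def by (rule rideal_K)
  have rS: "rideal S" unfolding S_def by (rule rideal_S)
  obtain \<phi> where ph: "riso (sub_rmod K) Q \<phi>" using iso unfolding rmod_isomorphic_def K_def S_def Q_def by blast
  have hom: "rhom (sub_rmod K) Q \<phi>" and bij: "bij_betw \<phi> K (rcarrier Q)"
    using ph unfolding riso_def sub_rmod_def by auto
  have carQ: "rcarrier Q = {coset y S | y. True}" unfolding Q_def quot_rmod_def by simp
  have smQ: "rsmul Q (coset u S) r = coset (u * r) S" for u r
    unfolding Q_def by (rule quot_smul[OF rS])
  have "\<phi> k \<in> rcarrier Q" using hom kK unfolding rhom_def sub_rmod_def K_def by auto
  then obtain t0 where t0: "\<phi> k = coset t0 S" using carQ by auto
  have KA: "z \<in> K \<Longrightarrow> f * z = z" for z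
    using ax unfolding K_def memK principal_right_def f_def by (auto simp flip: mult.assoc)
  have aS: "a * y \<in> S" for y unfolding S_def memS by (rule exI[of _ 0], rule exI[of _ y]) simp
  have fS: "f * y \<in> S" for y using aS[of "x * y"] unfolding f_def by (simp add: mult.assoc)
  define t where "t = (1 - f) * t0 * k"
  have phz: "\<phi> z = coset (t * z) S" if z: "z \<in> K" for z
  proof -
    have "\<phi> z = \<phi> (k * z)" using kid z unfolding K_def by simp
    also have "\<dots> = rsmul Q (\<phi> k) z" using hom kK unfolding rhom_def sub_rmod_def K_def by auto
    also have "\<dots> = coset (t0 * z) S" using t0 smQ by simp
    also have "\<dots> = coset (t * z) S"
    proof -
      have "t0 * z - t * z = f * (t0 * z)" using kid z unfolding t_def K_def
        by (simp add: algebra_simps mult.assoc)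
      then show ?thesis using coset_eq[OF rS] fS by metis
    qed
    finally show ?thesis .
  qed
  have kk: "k * k = k" using kid kK by blast
  have ff: "f * f = f" using ax unfolding f_def by (simp flip: mult.assoc)
  have ft: "f * t = 0" unfolding t_def by (simp add: algebra_simps ff flip: mult.assoc)
  have ttk: "t = t * k" unfolding t_def by (simp add: mult.assoc kk)
  have zK: "0 \<in> K" using rK unfolding rideal_def by blast
  have ph0: "\<phi> 0 = S" using phz[OF zK] coset_zero_eq[OF rS] by simp
  have inj: "z = 0" if "z \<in> K" "t * z \<in> S" for z
  proof -
    have "coset (t * z) S = coset 0 S" using that(2) coset_eq[OF rS] by simp
    then have "\<phi> z = S" using phz[OF that(1)] coset_zero_eq[OF rS] by simp
    then have "\<phi> z = \<phi> 0" using ph0 by simp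
    moreover have "inj_on \<phi> K" using bij unfolding bij_betw_def by simp
    ultimately show ?thesis using inj_onD that(1) zK by metis
  qed
  have "coset 1 S \<in> rcarrier Q" using carQ by blast
  then have "coset 1 S \<in> \<phi> ` K" using bij unfolding bij_betw_def by simp
  then obtain s where sK: "s \<in> K" and "\<phi> s = coset 1 S" by (auto elim!: imageE)
  then have "coset (t * s) S = coset 1 S" using phz by simp
  then have "t * s - 1 \<in> S" using coset_eq[OF rS] by blast
  then have "- (t * s - 1) \<in> S" using rS unfolding rideal_def by blast
  then have one: "1 - t * s \<in> S" by simp
  have ys: "y - t * s * y \<in> S" for y
  proof -
    have "(1 - t * s) * y \<in> S" using one rS unfolding rideal_def by blast
    then show ?thesis by (simp add: algebra_simps)
  qed
  have skill: "s * w = 0" if w: "w \<in> S" for w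
  proof -
    have swK: "s * w \<in> K" using sK rK unfolding rideal_def by blast
    have "t * (s * w) = w - (w - t * s * w)" by (simp add: mult.assoc)
    also have "\<dots> \<in> S" using w ys rideal_diff[OF rS] by blast
    finally show ?thesis using inj swK by blast
  qed
  have st: "s * t = k"
  proof -
    have "s * (t * k) \<in> K" using sK rK unfolding rideal_def by blast
    then have stkK: "s * t * k \<in> K" by (simp add: mult.assoc)
    have d: "k - s * t * k \<in> K" using rideal_diff[OF rK kK[folded K_def] stkK] .
    have "t * (k - s * t * k) = (t * k) - t * s * (t * k)" by (simp add: algebra_simps mult.assoc)
    also have "\<dots> \<in> S" using ys by simp
    finally have "k - s * t * k = 0" using inj d by blast
    then have "k = s * (t * k)" by (simp add: mult.assoc)
    then show ?thesis using ttk by simp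
  qed
  show ?thesis using ft ttk st skill ys unfolding S_def f_def by blast
qed

theorem lemma3p2:
  fixes a :: "'r::ring_1"
  assumes "regular_elem a"
    and "rprojective (quot_rmod (principal_right a) (a_rann_sq a))"
    and "rmod_isomorphic (sub_rmod (a_rann_sq a))
           (quot_rmod UNIV (set_plus_r (rann a) (principal_right a)))"
  shows "special_clean a"
proof -
  obtain x where ax: "a * x * a = a" using assms(1) unfolding regular_elem_def by metis
  define f where "f = a * x"
  define K where "K = a_rann_sq a"
  define S where "S = set_plus_r (rann a) (principal_right a)"
  obtain c where c: "c \<in> principal_right a" "c = c * f" "a * c = a * f" "\<forall>z\<in>K. c * z = 0"
    using step_proj[OF ax assms(2)] unfolding f_def K_def by blast
  have ff: "f * f = f" using ax unfolding f_def by (simp flip: mult.assoc)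
  have fa: "f * a = a" using ax unfolding f_def by simp
  have fA: "f * m = m" if "m \<in> principal_right a" for m
    using that ax unfolding principal_right_def f_def by (auto simp flip: mult.assoc)
  define k where "k = f - c"
  have ak: "a * k = 0" unfolding k_def using c(3) by (simp add: algebra_simps)
  have fk: "f * k = k" unfolding k_def using fA[OF c(1)] ff by (simp add: algebra_simps)
  have kf: "k * f = k" unfolding k_def using c(2) ff by (simp add: algebra_simps)
  have Kchar: "z \<in> K \<longleftrightarrow> f * z = z \<and> a * z = 0" for z
  proof
    assume "z \<in> K" then show "f * z = z \<and> a * z = 0" using fA unfolding K_def memK by blast
  next
    assume h: "f * z = z \<and> a * z = 0"
    then have "z = a * (x * z)" unfolding f_def by (simp add: mult.assoc)
    then have "z \<in> principal_right a" unfolding principal_right_def by blast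
    then show "z \<in> K" using h unfolding K_def memK by blast
  qed
  have kK: "k \<in> K" using Kchar fk ak by blast
  have kid: "\<forall>z\<in>K. k * z = z"
    unfolding k_def using c(4) Kchar by (simp add: algebra_simps)
  obtain s t where st: "f * t = 0" "t = t * k" "s * t = k" "\<forall>w\<in>S. s * w = 0"
      "\<forall>y. y - t * s * y \<in> S"
    using step_iso[OF ax kK[unfolded K_def] kid[unfolded K_def] assms(3)]
    unfolding f_def S_def by blast
  have tf: "t * f = t" using st(2) kf by (metis mult.assoc)
  have aS: "a * y \<in> S" for y unfolding S_def memS by (rule exI[of _ 0], rule exI[of _ y]) simp
  have rS: "y \<in> S" if "a * y = 0" for y unfolding S_def memS
    by (rule exI[of _ y], rule exI[of _ 0]) (simp add: that)
  have sf: "s * f = 0" using st(4) aS[of x] unfolding f_def by simp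
  have ff': "f * (f * z) = f * z" for z using ff by (simp flip: mult.assoc)
  have fa': "f * (a * z) = a * z" for z using fa by (simp flip: mult.assoc)
  have ak': "a * (k * z) = 0" for z using ak by (simp flip: mult.assoc)
  have fk': "f * (k * z) = k * z" for z using fk by (simp flip: mult.assoc)
  have ft': "f * (t * z) = 0" for z using st(1) by (simp flip: mult.assoc)
  have tk': "t * (k * z) = t * z" for z using st(2) by (simp flip: mult.assoc)
  have tf': "t * (f * z) = t * z" for z using tf by (simp flip: mult.assoc)
  have st': "s * (t * z) = k * z" for z using st(3) by (simp flip: mult.assoc)
  have sf': "s * (f * z) = 0" for z using sf by (simp flip: mult.assoc)
  have axf: "a * (x * (f * z)) = f * z" for z using ff' unfolding f_def by (simp add: mult.assoc)
  define e where "e = 1 - f - t"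
  have tt: "t * t = 0" using tf st(1) by (metis mult.assoc mult_zero_right)
  have ee: "e * e = e" unfolding e_def
    by (simp add: algebra_simps ff st(1) tf tt)
  have inter: "principal_right a \<inter> principal_right e = {0}"
  proof (rule set_eqI, rule iffI)
    fix z assume z: "z \<in> principal_right a \<inter> principal_right e"
    then have fz: "f * z = z" using fA by blast
    obtain y where y: "z = e * y" using z unfolding principal_right_def by blast
    have "e * z = z" using y ee by (simp flip: mult.assoc)
    then have "z = e * (f * z)" using fz by simp
    also have "\<dots> = - (t * z)" unfolding e_def by (simp add: algebra_simps ff' tf')
    finally have "f * z = f * (- (t * z))" by (rule arg_cong[where f="\<lambda>u. f * u"])
    then show "z \<in> {0}" using fz ft' by simp
  next
    fix z :: 'r assume "z \<in> {0}"
    then show "z \<in> principal_right a \<inter> principal_right e"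
      unfolding principal_right_def by (auto intro: exI[of _ 0])
  qed
  define w where "w = a - e"
  have w_inj: "y = 0" if wy: "w * y = 0" for y
  proof -
    have "f * (w * y) = a * y" unfolding w_def e_def
      by (simp add: algebra_simps fa' ff' ft')
    then have ay: "a * y = 0" using wy by simp
    have "w * y = a * y - y + f * y + t * y" unfolding w_def e_def by (simp add: algebra_simps)
    then have y1: "y = f * y + t * (f * y)" using wy ay tf' by (simp add: algebra_simps)
    have "s * y = 0" using st(4) rS[OF ay] by blast
    then have "s * (f * y) + s * (t * (f * y)) = 0" using y1 by (metis distrib_left)
    then have kfy: "k * (f * y) = 0" using sf' st' by simp
    then have "t * (f * y) = 0" using tk'[of "f * y"] by simp
    then have yf: "f * y = y" using y1 by simp
    then have "y \<in> K" using Kchar ay by blast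
    then have "y = k * (f * y)" using kid yf by simp
    then show ?thesis using kfy by simp
  qed
  have w_surj: "\<exists>v. w * v = 1"
  proof -
    define b where "b = (1 - f) + (1 - f) * x * f - t * x * f"
    have "b - t * s * b \<in> S" using st(5) by blast
    then obtain r0 v where rv: "b - t * s * b = r0 + a * v" "a * r0 = 0" unfolding S_def memS by blast
    define r1 where "r1 = - (k * (s * b + r0))"
    define r where "r = - (r0 + r1)"
    define y where "y = x * f + r"
    have fb: "f * b = 0" unfolding b_def by (simp add: algebra_simps ff ff' ft' flip: mult.assoc) (simp add: mult.assoc ft' ff')
    have ar: "a * r = 0" unfolding r_def r1_def by (simp add: algebra_simps rv(2) ak')
    have ay: "a * y = f" unfolding y_def using ar axf[of 1] by (simp add: algebra_simps)
    have b_eq: "b = t * (s * b) + r0 + a * v" using rv(1) by (simp add: algebra_simps mult.assoc)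
    have "f * b = f * (t * (s * b) + r0 + a * v)" using b_eq by (rule arg_cong[where f="\<lambda>u. f * u"])
    then have "f * b = f * (t * (s * b)) + f * r0 + f * (a * v)" by (simp add: distrib_left)
    then have "a * v + f * r0 = 0" using fb ft' fa' by (simp add: algebra_simps)
    then have "- (a * v) = f * r0" using neg_eq_iff_add_eq_0 by blast
    then have fr0: "f * r0 = - (a * v)" by (rule sym)
    have fr1: "f * r1 = r1" unfolding r1_def by (simp add: fk')
    have tr1: "t * r1 = - (t * (s * b)) - t * r0" unfolding r1_def by (simp add: tk' algebra_simps)
    have "(f + t - 1) * r = - (f * r0 + t * r0 - r0 + f * r1 + t * r1 - r1)"
      unfolding r_def by (simp add: algebra_simps)
    also have "\<dots> = b" using fr0 fr1 tr1 b_eq by (simp add: algebra_simps)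
    finally have hr: "(f + t - 1) * r = b" .
    have "w * y = a * y + (f + t - 1) * y" unfolding w_def e_def by (simp add: algebra_simps)
    also have "\<dots> = f + (f + t - 1) * (x * f) + b" using ay hr unfolding y_def
      by (simp add: distrib_left)
    also have "\<dots> = 1" unfolding b_def by (simp add: algebra_simps mult.assoc)
    finally show ?thesis by blast
  qed
  have "is_unit_r w"
  proof -
    obtain v where v: "w * v = 1" using w_surj by blast
    have "w * (v * w - 1) = 0" using v by (simp add: algebra_simps flip: mult.assoc)
    then have "v * w - 1 = 0" by (rule w_inj)
    then have "v * w = 1" by simp
    then show ?thesis unfolding is_unit_r_def using v by blast
  qed
  then show ?thesis unfolding special_clean_def using ee inter unfolding w_def by blast
qed

end
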